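(* Let $\Gamma$ be a triangulation of a connected closed surface $M$ and let $\tau$ be a $z$-orientation of $\Gamma$. For every vertex of type II, the number of edges of type II directed into this vertex equals the number of edges of type II directed out of it.
   Context: Let $M$ be a connected closed $2$-dimensional surface (not necessarily orientable). A triangulation of $M$ is a $2$-cell embedding of a connected simple finite graph in $M$ such that every face is a triangle; then every edge lies in exactly two distinct faces, and two distinct faces meet in an edge, in a vertex, or not at all. A zigzag in a triangulation $\Gamma$ is a sequence of edges $(e_i)_{i\in\mathbb N}$ such that for every $i$: $e_i$ and $e_{i+1}$ are distinct edges of a common face; the face containing $e_i,e_{i+1}$ is different from the face containing $e_{i+1},e_{i+2}$; and $e_i$, $e_{i+2}$ have no common vertex. Such a sequence is periodic and is regarded as a cyclic sequence $e_1,\dots,e_n$ ($n$ the minimal period); consecutive edges share a vertex, so a zigzag passes through each of its edges in a definite direction (from the vertex shared with the previous edge to the vertex shared with the next). The reversed sequence $Z^{-1}$ of a zigzag $Z$ is again a zigzag and $Z\neq Z^{-1}$. If $\Gamma$ has exactly $k$ zigzags up to reversal, a $z$-orientation of $\Gamma$ is a set $\tau$ of $k$ zigzags containing exactly one of $Z,Z^{-1}$ for every zigzag $Z$. For a $z$-orientation $\tau$, each edge $e$ either occurs twice in one zigzag of $\tau$ and in no other, or occurs once in each of exactly two distinct zigzags of $\tau$ and in no other. The edge $e$ is of type I if these two passages through $e$ are in opposite directions, and of type II if they are in the same direction; edges of type II are regarded as directed edges with this common direction. A vertex is of type I if all edges containing it are of type I, and of type II otherwise. *)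

theory Defs
  imports Main
begin

text \<open>A triangulation of a connected closed surface, given combinatorially by its set of
  faces F (each face a 3-element set of vertices; faces are determined by their vertex sets
  because the graph is simple and two distinct faces meet in an edge, a vertex or not at all).\<close>

definition tri_vertices :: "'a set set \<Rightarrow> 'a set" where
  "tri_vertices F = \<Union>F"

definition tri_edges :: "'a set set \<Rightarrow> 'a set set" where
  "tri_edges F = {e. card e = 2 \<and> (\<exists>f\<in>F. e \<subseteq> f)}"

definition link_verts :: "'a set set \<Rightarrow> 'a \<Rightarrow> 'a set" where
  "link_verts F v = {u. {u, v} \<in> tri_edges F}"

definition link_adj :: "'a set set \<Rightarrow> 'a \<Rightarrow> ('a \<times> 'a) set" where
  "link_adj F v = {(a, b). {v, a, b} \<in> F \<and> a \<noteq> b \<and> a \<noteq> v \<and> b \<noteq> v}"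

definition graph_adj :: "'a set set \<Rightarrow> ('a \<times> 'a) set" where
  "graph_adj F = {(a, b). {a, b} \<in> tri_edges F}"

definition triangulation :: "'a set set \<Rightarrow> bool" where
  "triangulation F \<longleftrightarrow>
     finite F \<and> F \<noteq> {} \<and>
     (\<forall>f\<in>F. card f = 3) \<and>
     (\<forall>e\<in>tri_edges F. card {f\<in>F. e \<subseteq> f} = 2) \<and>
     \<comment> \<open>surface condition: the link of every vertex is a single cycle\<close>
     (\<forall>v\<in>tri_vertices F. \<forall>a\<in>link_verts F v. \<forall>b\<in>link_verts F v.
         (a, b) \<in> (link_adj F v)\<^sup>*) \<and>
     \<comment> \<open>connectedness\<close>
     (\<forall>a\<in>tri_vertices F. \<forall>b\<in>tri_vertices F. (a, b) \<in> (graph_adj F)\<^sup>*)"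

text \<open>Zigzags, represented as (periodic) integer-indexed sequences of edges.\<close>
definition zigzag :: "'a set set \<Rightarrow> (int \<Rightarrow> 'a set) \<Rightarrow> bool" where
  "zigzag F Z \<longleftrightarrow> (\<forall>i.
      Z i \<in> tri_edges F \<and> Z (i + 1) \<in> tri_edges F \<and> Z i \<noteq> Z (i + 1) \<and>
      (\<exists>f\<in>F. Z i \<subseteq> f \<and> Z (i + 1) \<subseteq> f) \<and>
      (\<forall>f\<in>F. \<forall>f'\<in>F. Z i \<union> Z (i + 1) \<subseteq> f \<longrightarrow> Z (i + 1) \<union> Z (i + 2) \<subseteq> f' \<longrightarrow> f \<noteq> f') \<and>
      Z i \<inter> Z (i + 2) = {})"

definition zshift :: "(int \<Rightarrow> 'a set) \<Rightarrow> int \<Rightarrow> (int \<Rightarrow> 'a set)" where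
  "zshift Z k = (\<lambda>i. Z (i + k))"

definition zrev :: "(int \<Rightarrow> 'a set) \<Rightarrow> (int \<Rightarrow> 'a set)" where
  "zrev Z = (\<lambda>i. Z (- i))"

definition z_orientation :: "'a set set \<Rightarrow> (int \<Rightarrow> 'a set) set \<Rightarrow> bool" where
  "z_orientation F T \<longleftrightarrow>
     (\<forall>Z\<in>T. zigzag F Z) \<and>
     (\<forall>Z\<in>T. \<forall>k. zshift Z k \<in> T) \<and>
     (\<forall>Z. zigzag F Z \<longrightarrow> (Z \<in> T \<longleftrightarrow> zrev Z \<notin> T))"

text \<open>Some zigzag of T passes through the edge {u,w} in direction from u to w
  (u shared with the previous edge, w shared with the next edge).\<close>
definition passes :: "(int \<Rightarrow> 'a set) set \<Rightarrow> 'a \<Rightarrow> 'a \<Rightarrow> bool" where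
  "passes T u w \<longleftrightarrow> (\<exists>Z\<in>T. \<exists>i. Z i = {u, w} \<and> u \<in> Z (i - 1) \<and> w \<in> Z (i + 1))"

text \<open>The edge {u,w} is of type II and directed from u to w: all passages through it go
  from u to w.\<close>
definition typeII_dir :: "'a set set \<Rightarrow> (int \<Rightarrow> 'a set) set \<Rightarrow> 'a \<Rightarrow> 'a \<Rightarrow> bool" where
  "typeII_dir F T u w \<longleftrightarrow> {u, w} \<in> tri_edges F \<and> passes T u w \<and> \<not> passes T w u"

definition typeII_edge :: "'a set set \<Rightarrow> (int \<Rightarrow> 'a set) set \<Rightarrow> 'a set \<Rightarrow> bool" where
  "typeII_edge F T e \<longleftrightarrow> (\<exists>u w. e = {u, w} \<and> typeII_dir F T u w)"

definition typeII_vertex :: "'a set set \<Rightarrow> (int \<Rightarrow> 'a set) set \<Rightarrow> 'a \<Rightarrow> bool" where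
  "typeII_vertex F T v \<longleftrightarrow> v \<in> tri_vertices F \<and>
     (\<exists>e\<in>tri_edges F. v \<in> e \<and> typeII_edge F T e)"

end

theory Submission
  imports Defs
begin


definition "vst F p q \<longleftrightarrow> p \<in> tri_edges F \<and> q \<in> tri_edges F \<and> p \<noteq> q \<and> p \<union> q \<in> F"
definition "cnd F p q r \<longleftrightarrow> r \<in> tri_edges F \<and> r \<noteq> q \<and> (\<exists>g\<in>F. q \<union> r \<subseteq> g \<and> g \<noteq> p \<union> q) \<and> p \<inter> r = {}"

lemma edge_card: "e \<in> tri_edges F \<Longrightarrow> card e = 2"
  by (simp add: tri_edges_def)

lemma union3:
  assumes "card p = 2" "card q = 2" "p \<noteq> q" "p \<union> q \<subseteq> f" "card f = 3"
  shows "p \<union> q = f"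
proof -
  have fin: "finite p" "finite q" "finite f" using assms by (auto intro: card_ge_0_finite)
  have "card (p \<union> q) \<ge> 3"
  proof (rule ccontr)
    assume "\<not> ?thesis"
    hence "card (p \<union> q) \<le> 2" by simp
    moreover have "card p \<le> card (p \<union> q)" "card q \<le> card (p\<union>q)"
      using fin by (auto intro: card_mono)
    ultimately have "card (p \<union> q) = card p" "card (p \<union> q) = card q" using assms by auto
    hence "p = p \<union> q" "q = p \<union> q" using fin by (metis Un_upper1 Un_upper2 card_subset_eq finite_Un)+
    thus False using assms by auto
  qed
  thus ?thesis using assms fin by (metis card_mono card_subset_eq le_antisym)
qed

lemma vst_inter: assumes "\<forall>f\<in>F. card f = 3" "vst F p q" shows "p \<inter> q \<noteq> {}"
proof
  assume "p \<inter> q = {}"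
  have "card p = 2" "card q = 2" using assms by (auto simp: vst_def tri_edges_def)
  hence "finite p" "finite q" by (auto intro: card_ge_0_finite)
  hence "card (p \<union> q) = 4" using \<open>p \<inter> q = {}\<close> \<open>card p = 2\<close> \<open>card q = 2\<close> by (simp add: card_Un_disjoint)
  thus False using assms by (auto simp: vst_def)
qed

lemma zz_iff:
  assumes "\<forall>f\<in>F. card f = 3"
  shows "zigzag F Z \<longleftrightarrow> (\<forall>i. vst F (Z i) (Z (i+1)) \<and> cnd F (Z i) (Z (i+1)) (Z (i+2)))"
proof
  assume z: "zigzag F Z"
  have v: "vst F (Z i) (Z (i+1))" for i
  proof -
    have zi: "Z i \<in> tri_edges F" "Z (i+1) \<in> tri_edges F" "Z i \<noteq> Z (i+1)" "\<exists>f\<in>F. Z i \<subseteq> f \<and> Z (i + 1) \<subseteq> f"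
      using z[unfolded zigzag_def, rule_format, of i] by auto
    then obtain f where "f \<in> F" "Z i \<union> Z (i+1) \<subseteq> f" by auto
    thus ?thesis using union3[of "Z i" "Z (i+1)" f] assms zi by (auto simp: vst_def edge_card)
  qed
  show "\<forall>i. vst F (Z i) (Z (i+1)) \<and> cnd F (Z i) (Z (i+1)) (Z (i+2))"
  proof
    fix i
    have v2: "vst F (Z (i+1)) (Z (i+2))" using v[of "i+1"] by (simp add: add.assoc)
    have zi: "Z i \<inter> Z (i+2) = {}" 
      "\<forall>f\<in>F. \<forall>f'\<in>F. Z i \<union> Z (i + 1) \<subseteq> f \<longrightarrow> Z (i + 1) \<union> Z (i + 2) \<subseteq> f' \<longrightarrow> f \<noteq> f'"
      using z[unfolded zigzag_def, rule_format, of i] by auto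
    have "Z (i+1) \<union> Z (i+2) \<noteq> Z i \<union> Z (i+1)"
    proof
      assume "Z (i+1) \<union> Z (i+2) = Z i \<union> Z (i+1)"
      moreover have "Z i \<union> Z (i+1) \<in> F" using v[of i] by (simp add: vst_def)
      ultimately show False using zi(2) by auto
    qed
    moreover have "Z (i+1) \<union> Z (i+2) \<in> F" using v2 by (simp add: vst_def)
    ultimately have "cnd F (Z i) (Z (i+1)) (Z (i+2))"
      using v2 zi(1) unfolding cnd_def vst_def by auto
    thus "vst F (Z i) (Z (i+1)) \<and> cnd F (Z i) (Z (i+1)) (Z (i+2))" using v by simp
  qed
next
  assume h: "\<forall>i. vst F (Z i) (Z (i+1)) \<and> cnd F (Z i) (Z (i+1)) (Z (i+2))"
  show "zigzag F Z" unfolding zigzag_def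
  proof
    fix i
    have v: "vst F (Z i) (Z (i+1))" and c: "cnd F (Z i) (Z (i+1)) (Z (i+2))" using h by auto
    have v2: "vst F (Z (i+1)) (Z (i+2))" using h[rule_format, of "i+1"] by (simp add: add.assoc)
    have ne: "f \<noteq> f'" if "f \<in> F" "f' \<in> F" "Z i \<union> Z (i+1) \<subseteq> f" "Z (i+1) \<union> Z (i+2) \<subseteq> f'" for f f'
    proof
      assume "f = f'"
      have "Z i \<union> Z (i+1) = f" using union3[of "Z i" "Z (i+1)" f] v that assms by (auto simp: vst_def edge_card)
      moreover have "Z (i+1) \<union> Z (i+2) = f'" using union3[of "Z (i+1)" "Z (i+2)" f'] v2 that assms by (auto simp: vst_def edge_card)
      ultimately have "Z (i+2) \<subseteq> Z (i+1)" using \<open>f = f'\<close> c unfolding cnd_def by blast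
      moreover have "card (Z (i+2)) = 2" "card (Z (i+1)) = 2" using v2 by (auto simp: vst_def edge_card)
      ultimately have "Z (i+2) = Z (i+1)" by (metis card_subset_eq card.infinite zero_neq_numeral)
      thus False using c by (simp add: cnd_def)
    qed
    have e: "Z i \<in> tri_edges F" "Z (i + 1) \<in> tri_edges F" "Z i \<noteq> Z (i + 1)" "Z i \<union> Z (i+1) \<in> F"
      "Z i \<inter> Z (i + 2) = {}" using v c unfolding vst_def cnd_def by auto
    show "Z i \<in> tri_edges F \<and> Z (i + 1) \<in> tri_edges F \<and> Z i \<noteq> Z (i + 1) \<and>
      (\<exists>f\<in>F. Z i \<subseteq> f \<and> Z (i + 1) \<subseteq> f) \<and>
      (\<forall>f\<in>F. \<forall>f'\<in>F. Z i \<union> Z (i + 1) \<subseteq> f \<longrightarrow> Z (i + 1) \<union> Z (i + 2) \<subseteq> f' \<longrightarrow> f \<noteq> f') \<and>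
      Z i \<inter> Z (i + 2) = {}"
      using e ne by auto
  qed
qed

lemma vst_sym: "vst F p q = vst F q p" by (auto simp: vst_def Un_commute)

lemma tri_facts:
  assumes "triangulation F"
  shows "finite F" "\<forall>f\<in>F. card f = 3" "\<forall>e\<in>tri_edges F. card {f\<in>F. e \<subseteq> f} = 2"
  using assms by (auto simp: triangulation_def)

lemma inter1:
  assumes "triangulation F" "vst F p q" shows "card (p \<inter> q) = 1"
proof -
  have c: "card p = 2" "card q = 2" "card (p \<union> q) = 3" using assms tri_facts[OF assms(1)]
    by (auto simp: vst_def edge_card)
  hence "finite p" "finite q" by (auto intro: card_ge_0_finite)
  from card_Un_Int[OF this] c show ?thesis by simp
qed

lemma uniq:
  assumes T: "triangulation F" and v: "vst F p q" and c1: "cnd F p q r1" and c2: "cnd F p q r2"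
  shows "r1 = r2"
proof -
  note tf = tri_facts[OF T]
  obtain g1 where g1: "g1 \<in> F" "q \<union> r1 \<subseteq> g1" "g1 \<noteq> p \<union> q" using c1 by (auto simp: cnd_def)
  obtain g2 where g2: "g2 \<in> F" "q \<union> r2 \<subseteq> g2" "g2 \<noteq> p \<union> q" using c2 by (auto simp: cnd_def)
  define S where "S = {f\<in>F. q \<subseteq> f}"
  have cS: "card S = 2" using tf(3) v by (auto simp: S_def vst_def)
  hence fS: "finite S" by (auto intro: card_ge_0_finite)
  have "g1 = g2"
  proof (rule ccontr)
    assume "g1 \<noteq> g2"
    have "{p \<union> q, g1, g2} \<subseteq> S" using g1 g2 v by (auto simp: S_def vst_def)
    hence "card {p \<union> q, g1, g2} \<le> 2" using cS fS card_mono by metis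
    thus False using \<open>g1 \<noteq> g2\<close> g1 g2 by auto
  qed
  have cg: "card g1 = 3" using tf(2) g1 by auto
  hence fg: "finite g1" by (auto intro: card_ge_0_finite)
  have "p \<inter> q \<noteq> {}" using inter1[OF T v] by auto
  hence "g1 \<inter> p \<noteq> {}" using g1 by auto
  hence "card (g1 \<inter> p) \<ge> 1" using fg by (simp add: Suc_leI card_gt_0_iff)
  moreover have "card (g1 - p) = card g1 - card (g1 \<inter> p)"
    using card_Diff_subset_Int[of g1 p] fg by (simp add: Int_commute)
  ultimately have cd: "card (g1 - p) \<le> 2" using cg by simp
  have e: "card r1 = 2" "card r2 = 2" using c1 c2 by (auto simp: cnd_def edge_card)
  have "r1 \<subseteq> g1 - p" "r2 \<subseteq> g1 - p" using g1 g2 c1 c2 \<open>g1 = g2\<close> by (auto simp: cnd_def)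
  hence "r1 = g1 - p" "r2 = g1 - p" using card_seteq[of "g1 - p"] fg e cd by auto
  thus ?thesis by simp
qed

lemma exist:
  assumes T: "triangulation F" and v: "vst F p q"
  shows "\<exists>r. cnd F p q r \<and> vst F q r"
proof -
  note tf = tri_facts[OF T]
  define S where "S = {f\<in>F. q \<subseteq> f}"
  have cS: "card S = 2" using tf(3) v by (auto simp: S_def vst_def)
  have fS: "p \<union> q \<in> S" using v by (auto simp: S_def vst_def)
  obtain g where g: "g \<in> S" "g \<noteq> p \<union> q"
  proof -
    have "card (S - {p \<union> q}) = 1" using cS fS by (simp add: card_Diff_singleton_if)
    then obtain g where "S - {p \<union> q} = {g}" using card_1_singletonE by blast
    thus ?thesis using that by blast
  qed
  have gF: "g \<in> F" "q \<subseteq> g" using g by (auto simp: S_def)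
  obtain c where c: "p \<inter> q = {c}" using inter1[OF T v] card_1_singletonE by blast
  have cg: "card g = 3" using tf(2) gF by auto
  hence fg: "finite g" by (auto intro: card_ge_0_finite)
  have cp: "card p = 2" "card q = 2" "card (p \<union> q) = 3" using v tf(2) by (auto simp: vst_def edge_card)
  have fpq: "finite p" "finite q" using cp by (auto intro: card_ge_0_finite)
  define r where "r = g - {c}"
  have cpq: "c \<in> p" "c \<in> q" using c by auto
  have cgc: "c \<in> g" using cpq gF by auto
  have rg: "r \<subseteq> g" "c \<notin> r" by (auto simp: r_def)
  have cr: "card r = 2" using cg cgc fg by (simp add: r_def)
  have pg: "p \<inter> g = {c}"
  proof (rule ccontr)
    assume "p \<inter> g \<noteq> {c}"
    then obtain x where x: "x \<in> p" "x \<in> g" "x \<noteq> c" using c cgc by blast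
    have "p \<subseteq> insert x q"
    proof -
      obtain a b where ab: "p = {a, b}" "a \<noteq> b" using cp(1) by (auto simp: card_2_iff)
      thus ?thesis using x cpq by blast
    qed
    hence "p \<union> q \<subseteq> g" using x gF by auto
    hence "p \<union> q = g" using card_seteq[OF fg, of "p \<union> q"] cg cp by simp
    thus False using g by simp
  qed
  have "r \<in> tri_edges F" unfolding tri_edges_def using cr gF(1) rg by blast
  moreover have "r \<noteq> q" using cpq rg by blast
  moreover have "q \<union> r = g" using gF(2) cpq by (auto simp: r_def)
  moreover have "p \<inter> r = {}" using pg by (auto simp: r_def)
  moreover have "q \<in> tri_edges F" using v by (simp add: vst_def)
  ultimately have "cnd F p q r \<and> vst F q r" using gF g by (auto simp: cnd_def vst_def)
  thus ?thesis by blast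
qed

lemma swapc:
  assumes v: "vst F p q" and c: "cnd F q p r" shows "cnd F r p q"
proof -
  have "p \<union> q \<noteq> r \<union> p"
  proof
    assume h: "p \<union> q = r \<union> p"
    have "r \<inter> q = {}" using c by (auto simp: cnd_def)
    hence "r \<subseteq> p" using h by blast
    moreover have "card r = 2" "card p = 2" using v c by (auto simp: vst_def cnd_def edge_card)
    ultimately have "r = p" by (metis card_seteq card.infinite order_refl zero_neq_numeral)
    thus False using c by (simp add: cnd_def)
  qed
  thus ?thesis using v c unfolding cnd_def vst_def by auto
qed

definition "nxt F s = (snd s, SOME r. cnd F (fst s) (snd s) r \<and> vst F (snd s) r)"
definition "prv F s = (SOME r. cnd F (snd s) (fst s) r \<and> vst F (fst s) r, fst s)"

lemma nxt_ok:
  assumes T: "triangulation F" and v: "vst F (fst s) (snd s)"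
  shows "fst (nxt F s) = snd s" "vst F (fst (nxt F s)) (snd (nxt F s))"
    "cnd F (fst s) (snd s) (snd (nxt F s))"
proof -
  have "\<exists>r. cnd F (fst s) (snd s) r \<and> vst F (snd s) r" using exist[OF T v] .
  from someI_ex[OF this] show "fst (nxt F s) = snd s" "vst F (fst (nxt F s)) (snd (nxt F s))"
    "cnd F (fst s) (snd s) (snd (nxt F s))" by (auto simp: nxt_def)
qed

lemma prv_ok:
  assumes T: "triangulation F" and v: "vst F (fst s) (snd s)"
  shows "snd (prv F s) = fst s" "vst F (fst (prv F s)) (snd (prv F s))"
    "cnd F (snd s) (fst s) (fst (prv F s))"
proof -
  have v': "vst F (snd s) (fst s)" using v vst_sym by metis
  have "\<exists>r. cnd F (snd s) (fst s) r \<and> vst F (fst s) r" using exist[OF T v'] .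
  from someI_ex[OF this] show "snd (prv F s) = fst s" "vst F (fst (prv F s)) (snd (prv F s))"
    "cnd F (snd s) (fst s) (fst (prv F s))" by (auto simp: prv_def vst_sym)
qed

lemma nxt_prv:
  assumes T: "triangulation F" and v: "vst F (fst s) (snd s)"
  shows "nxt F (prv F s) = s"
proof -
  obtain p q where s: "s = (p, q)" by force
  define r where "r = fst (prv F s)"
  have pr: "prv F s = (r, p)" using prv_ok(1)[OF T v] s r_def by (metis prod.collapse fst_conv)
  have c: "cnd F q p r" and vr: "vst F r p" using prv_ok[OF T v] s pr by auto
  have vpq: "vst F p q" using v s by simp
  have "(SOME x. cnd F r p x \<and> vst F p x) = q"
  proof (rule some_equality)
    show "cnd F r p q \<and> vst F p q" using swapc[OF vpq c] vpq by simp
    fix x assume "cnd F r p x \<and> vst F p x"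
    thus "x = q" using uniq[OF T vr, of x q] swapc[OF vpq c] by simp
  qed
  thus ?thesis using pr s by (simp add: nxt_def)
qed

lemma exists_zz:
  assumes T: "triangulation F" and v: "vst F p q"
  shows "\<exists>Z. zigzag F Z \<and> Z 0 = p \<and> Z 1 = q"
proof -
  define s0 where "s0 = (p, q)"
  define st where "st i = (if 0 \<le> i then (nxt F ^^ nat i) s0 else (prv F ^^ nat (-i)) s0)" for i :: int
  have v0: "vst F (fst s0) (snd s0)" using v by (simp add: s0_def)
  have vn: "vst F (fst ((nxt F ^^ n) s0)) (snd ((nxt F ^^ n) s0))" for n
    by (induction n) (use v0 nxt_ok[OF T] in auto)
  have vp: "vst F (fst ((prv F ^^ n) s0)) (snd ((prv F ^^ n) s0))" for n
    by (induction n) (use v0 prv_ok[OF T] in auto)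
  have vst_st: "vst F (fst (st i)) (snd (st i))" for i
    using vn vp by (simp add: st_def)
  have step: "st (i+1) = nxt F (st i)" for i
  proof (cases "0 \<le> i")
    case True
    hence "nat (i+1) = Suc (nat i)" by simp
    thus ?thesis using True by (simp add: st_def)
  next
    case False
    define m where "m = nat (-i-1)"
    have i: "i = - int (Suc m)" using False by (simp add: m_def)
    have "nat (int m + 1) = Suc m" by simp
    hence a: "st i = prv F ((prv F ^^ m) s0)" using i by (simp add: st_def)
    have b: "st (i+1) = (prv F ^^ m) s0" using i by (cases m) (auto simp: st_def nat_add_distrib)
    show ?thesis using a b nxt_prv[OF T vp[of m]] by simp
  qed
  define Z where "Z i = fst (st i)" for i
  have Zs: "Z (i+1) = snd (st i)" for i using step[of i] nxt_ok(1)[OF T vst_st[of i]] by (simp add: Z_def)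
  have "zigzag F Z"
    unfolding zz_iff[OF tri_facts(2)[OF T]]
  proof
    fix i
    have "Z (i+2) = snd (st (i+1))" using Zs[of "i+1"] by (simp add: add.assoc)
    also have "\<dots> = snd (nxt F (st i))" using step by simp
    finally have z2: "Z (i+2) = snd (nxt F (st i))" .
    show "vst F (Z i) (Z (i+1)) \<and> cnd F (Z i) (Z (i+1)) (Z (i+2))"
      using vst_st[of i] nxt_ok(3)[OF T vst_st[of i]] z2 Zs[of i] by (simp add: Z_def)
  qed
  moreover have "Z 0 = p" by (simp add: Z_def st_def s0_def)
  moreover have "Z 1 = q" using Zs[of 0] by (simp add: st_def s0_def)
  ultimately show ?thesis by blast
qed

lemma zz_facts:
  assumes T: "triangulation F" and z: "zigzag F Z"
  shows "vst F (Z i) (Z (i+1))" "cnd F (Z i) (Z (i+1)) (Z (i+2))"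
  using z unfolding zz_iff[OF tri_facts(2)[OF T]] by auto

lemma zigzag_zrev:
  assumes T: "triangulation F" and z: "zigzag F Z"
  shows "zigzag F (zrev Z)"
  unfolding zz_iff[OF tri_facts(2)[OF T]]
proof
  fix i
  have a: "vst F (Z (-i-1)) (Z (-i))" using zz_facts(1)[OF T z, of "-i-1"] by simp
  have eq: "-i-2+1 = -i-1" "-i-2+2 = -i" by simp_all
  have b: "vst F (Z (-i-2)) (Z (-i-1))" using zz_facts(1)[OF T z, of "-i-2"] by (simp only: eq)
  have c: "cnd F (Z (-i-2)) (Z (-i-1)) (Z (-i))" using zz_facts(2)[OF T z, of "-i-2"] by (simp only: eq)
  have d: "cnd F (Z (-i)) (Z (-i-1)) (Z (-i-2))"
    using swapc[of F "Z (-i-1)" "Z (-i-2)" "Z (-i)"] b c vst_sym by metis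
  show "vst F (zrev Z i) (zrev Z (i+1)) \<and> cnd F (zrev Z i) (zrev Z (i+1)) (zrev Z (i+2))"
  proof -
    have e2: "-(i+1) = -i-1" "-(i+2) = -i-2" by simp_all
    show ?thesis using a d vst_sym unfolding zrev_def e2 by metis
  qed
qed

lemma zigzag_zshift:
  assumes z: "zigzag F Z" shows "zigzag F (zshift Z k)"
  unfolding zigzag_def zshift_def
proof
  fix i
  show "Z (i + k) \<in> tri_edges F \<and>
       Z (i + 1 + k) \<in> tri_edges F \<and>
       Z (i + k) \<noteq> Z (i + 1 + k) \<and>
       (\<exists>f\<in>F. Z (i + k) \<subseteq> f \<and> Z (i + 1 + k) \<subseteq> f) \<and>
       (\<forall>f\<in>F. \<forall>f'\<in>F.
           Z (i + k) \<union> Z (i + 1 + k) \<subseteq> f \<longrightarrow>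
           Z (i + 1 + k) \<union> Z (i + 2 + k) \<subseteq> f' \<longrightarrow> f \<noteq> f') \<and>
       Z (i + k) \<inter> Z (i + 2 + k) = {}"
    using z[unfolded zigzag_def, rule_format, of "i+k"] by (simp add: algebra_simps)
qed

lemma fwd:
  assumes T: "triangulation F" and z: "zigzag F Z" and w: "zigzag F W"
    and e: "Z k = W k" "Z (k+1) = W (k+1)"
  shows "Z (k + int n) = W (k + int n) \<and> Z (k + int n + 1) = W (k + int n + 1)"
proof (induction n)
  case 0 then show ?case using e by simp
next
  case (Suc n)
  define j where "j = k + int n"
  have h: "Z j = W j" "Z (j+1) = W (j+1)" using Suc by (auto simp: j_def)
  have "Z (j+2) = W (j+2)"
    using uniq[OF T zz_facts(1)[OF T z, of j] zz_facts(2)[OF T z, of j]] zz_facts(2)[OF T w, of j] h by simp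
  thus ?case using h by (simp add: j_def algebra_simps)
qed

lemma determ:
  assumes T: "triangulation F" and z: "zigzag F Z" and w: "zigzag F W"
    and e: "Z k = W k" "Z (k+1) = W (k+1)"
  shows "Z = W"
proof
  fix j
  show "Z j = W j"
  proof (cases "k \<le> j")
    case True
    then obtain n where "j = k + int n" by (metis le_iff_add zle_iff_zadd)
    thus ?thesis using fwd[OF T z w e] by simp
  next
    case False
    have e': "zrev Z (-(k+1)) = zrev W (-(k+1))" "zrev Z (-(k+1) + 1) = zrev W (-(k+1) + 1)"
      using e by (simp_all add: zrev_def add.commute)
    define n where "n = nat (k+1-j)"
    have n: "-j = -(k+1) + int n" using False by (simp add: n_def)
    have "zrev Z (-j) = zrev W (-j)"
      using fwd[OF T zigzag_zrev[OF T z] zigzag_zrev[OF T w] e'] n by metis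
    thus ?thesis by (simp add: zrev_def)
  qed
qed

definition "Pz T v a b \<longleftrightarrow> (\<exists>Z\<in>T. \<exists>i. Z i = {a, v} \<and> Z (i+1) = {v, b})"

lemma zo_zz: "z_orientation F T \<Longrightarrow> Z \<in> T \<Longrightarrow> zigzag F Z"
  by (simp add: z_orientation_def)

lemma xor:
  assumes T: "triangulation F" and O: "z_orientation F T"
    and f: "{v,a,b} \<in> F" "a \<noteq> b" "a \<noteq> v" "b \<noteq> v"
  shows "Pz T v a b \<longleftrightarrow> \<not> Pz T v b a"
proof -
  have vs: "vst F {a,v} {v,b}"
  proof -
    have "{a,v} \<in> tri_edges F" "{v,b} \<in> tri_edges F" using f unfolding tri_edges_def by auto
    moreover have "{a,v} \<union> {v,b} = {v,a,b}" by auto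
    ultimately show ?thesis using f by (auto simp: vst_def doubleton_eq_iff)
  qed
  obtain Z0 where Z0: "zigzag F Z0" "Z0 0 = {a,v}" "Z0 1 = {v,b}" using exists_zz[OF T vs] by blast
  have ex: "Pz T v a b \<or> Pz T v b a"
  proof (cases "Z0 \<in> T")
    case True
    thus ?thesis using Z0 unfolding Pz_def by (metis add_0)
  next
    case False
    hence "zrev Z0 \<in> T" using O Z0(1) by (auto simp: z_orientation_def)
    moreover have "zrev Z0 (-1) = {b,v}" "zrev Z0 (-1+1) = {v,a}" using Z0 by (auto simp: zrev_def)
    ultimately show ?thesis unfolding Pz_def by blast
  qed
  have nb: "\<not> (Pz T v a b \<and> Pz T v b a)"
  proof
    assume "Pz T v a b \<and> Pz T v b a"
    then obtain Z Z' i j where Z: "Z \<in> T" "Z i = {a,v}" "Z (i+1) = {v,b}"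
      and Z': "Z' \<in> T" "Z' j = {b,v}" "Z' (j+1) = {v,a}" unfolding Pz_def by blast
    have zz: "zigzag F Z" "zigzag F Z'" using Z Z' zo_zz[OF O] by auto
    define m where "m = -i-j-1"
    define W where "W = zshift (zrev Z') m"
    have wz: "zigzag F W" using zigzag_zshift[OF zigzag_zrev[OF T zz(2)]] by (simp add: W_def)
    have "W i = Z' (j+1)" "W (i+1) = Z' j" by (simp_all add: W_def zshift_def zrev_def m_def algebra_simps)
    hence "W i = Z i" "W (i+1) = Z (i+1)" using Z Z' by (auto simp: insert_commute)
    hence "W = Z" using determ[OF T wz zz(1)] by blast
    hence "W \<in> T" using Z by simp
    hence "zshift W (-m) \<in> T" using O unfolding z_orientation_def by blast
    moreover have "zshift W (-m) = zrev Z'" by (simp add: W_def zshift_def)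
    ultimately have "zrev Z' \<in> T" by simp
    thus False using O Z' zz by (auto simp: z_orientation_def)
  qed
  show ?thesis using ex nb by blast
qed

lemma edge2: "e \<in> tri_edges F \<Longrightarrow> v \<in> e \<Longrightarrow> \<exists>b. e = {v, b} \<and> b \<noteq> v"
  by (auto simp: tri_edges_def card_2_iff)

lemma passes_in:
  assumes T: "triangulation F" and O: "z_orientation F T"
  shows "passes T a v \<longleftrightarrow> (\<exists>b. {v,a,b} \<in> F \<and> b \<noteq> a \<and> b \<noteq> v \<and> Pz T v a b)"
proof
  assume "passes T a v"
  then obtain Z i where Z: "Z \<in> T" "Z i = {a,v}" "a \<in> Z (i-1)" "v \<in> Z (i+1)" by (auto simp: passes_def)
  have vs: "vst F (Z i) (Z (i+1))" using zz_facts(1)[OF T zo_zz[OF O Z(1)]] .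
  then obtain b where b: "Z (i+1) = {v,b}" "b \<noteq> v" using edge2 Z(4) by (metis vst_def)
  have "b \<noteq> a" using vs Z(2) b by (auto simp: vst_def insert_commute)
  moreover have "{v,a,b} \<in> F" using vs Z(2) b by (auto simp: vst_def insert_commute)
  ultimately show "\<exists>b. {v,a,b} \<in> F \<and> b \<noteq> a \<and> b \<noteq> v \<and> Pz T v a b"
    using b Z unfolding Pz_def by blast
next
  assume "\<exists>b. {v,a,b} \<in> F \<and> b \<noteq> a \<and> b \<noteq> v \<and> Pz T v a b"
  then obtain b Z i where Z: "Z \<in> T" "Z i = {a,v}" "Z (i+1) = {v,b}" unfolding Pz_def by blast
  have zz: "zigzag F Z" using zo_zz[OF O Z(1)] .
  have eq: "i - 1 + 1 = i" "i - 1 + 2 = i + 1" by simp_all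
  have "Z (i-1) \<inter> Z i \<noteq> {}" using vst_inter[OF tri_facts(2)[OF T] zz_facts(1)[OF T zz, of "i-1"]] by simp
  moreover have "Z (i-1) \<inter> Z (i+1) = {}" using zz_facts(2)[OF T zz, of "i-1"] by (simp only: eq cnd_def)
  ultimately have "a \<in> Z (i-1)" using Z by auto
  thus "passes T a v" using Z unfolding passes_def by auto
qed

lemma passes_out:
  assumes T: "triangulation F" and O: "z_orientation F T"
  shows "passes T v a \<longleftrightarrow> (\<exists>b. {v,a,b} \<in> F \<and> b \<noteq> a \<and> b \<noteq> v \<and> Pz T v b a)"
proof
  assume "passes T v a"
  then obtain Z i where Z: "Z \<in> T" "Z i = {v,a}" "v \<in> Z (i-1)" "a \<in> Z (i+1)" by (auto simp: passes_def)
  have zz: "zigzag F Z" using zo_zz[OF O Z(1)] .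
  have eq: "i - 1 + 1 = i" by simp
  have vs: "vst F (Z (i-1)) (Z i)" using zz_facts(1)[OF T zz, of "i-1"] by (simp only: eq)
  then obtain b where b: "Z (i-1) = {v,b}" "b \<noteq> v" using edge2 Z(3) by (metis vst_def)
  have "b \<noteq> a" using vs Z(2) b by (auto simp: vst_def)
  moreover have "{v,a,b} \<in> F" using vs Z(2) b by (auto simp: vst_def insert_commute)
  moreover have "Pz T v b a" unfolding Pz_def using Z b eq by (metis insert_commute)
  ultimately show "\<exists>b. {v,a,b} \<in> F \<and> b \<noteq> a \<and> b \<noteq> v \<and> Pz T v b a"
    using b by blast
next
  assume "\<exists>b. {v,a,b} \<in> F \<and> b \<noteq> a \<and> b \<noteq> v \<and> Pz T v b a"
  then obtain b Z j where Z: "Z \<in> T" "Z j = {b,v}" "Z (j+1) = {v,a}" unfolding Pz_def by blast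
  have zz: "zigzag F Z" using zo_zz[OF O Z(1)] .
  have eq: "j + 1 + 1 = j + 2" by simp
  have "Z (j+1) \<inter> Z (j+2) \<noteq> {}" using vst_inter[OF tri_facts(2)[OF T] zz_facts(1)[OF T zz, of "j+1"]] by (simp add: add.assoc)
  moreover have "Z j \<inter> Z (j+2) = {}" using zz_facts(2)[OF T zz, of "j"] by (simp add: cnd_def)
  ultimately have "a \<in> Z (j+1+1)" using Z by (auto simp: eq)
  moreover have "v \<in> Z (j + 1 - 1)" using Z by simp
  ultimately show "passes T v a" using Z unfolding passes_def by blast
qed



lemma finU: assumes T: "triangulation F" shows "finite (\<Union>F)"
proof -
  have "\<forall>f\<in>F. finite f" using tri_facts(2)[OF T] by (auto intro: card_ge_0_finite)
  thus ?thesis using tri_facts(1)[OF T] by auto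
qed

definition "Nb F v a = {b. {v,a,b} \<in> F \<and> b \<noteq> a \<and> b \<noteq> v}"

lemma card_Nb:
  assumes T: "triangulation F" and e: "{a,v} \<in> tri_edges F"
  shows "card (Nb F v a) = 2"
proof -
  have av: "a \<noteq> v" using e by (auto simp: tri_edges_def)
  have "bij_betw (\<lambda>b. {v,a,b}) (Nb F v a) {f\<in>F. {a,v} \<subseteq> f}"
  proof (rule bij_betwI')
    fix x y assume "x \<in> Nb F v a" "y \<in> Nb F v a"
    thus "({v,a,x} = {v,a,y}) = (x = y)" by (auto simp: Nb_def doubleton_eq_iff insert_eq_iff)
  next
    fix x assume "x \<in> Nb F v a" thus "{v,a,x} \<in> {f\<in>F. {a,v} \<subseteq> f}" by (auto simp: Nb_def)
  next
    fix f assume f: "f \<in> {f\<in>F. {a,v} \<subseteq> f}"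
    hence cf: "card f = 3" using tri_facts(2)[OF T] by auto
    hence "finite f" by (auto intro: card_ge_0_finite)
    hence "card (f - {a,v}) = 1" using cf f av by (simp add: card_Diff_subset)
    then obtain b where b: "f - {a,v} = {b}" using card_1_singletonE by blast
    hence "f = {v,a,b}" "b \<noteq> a" "b \<noteq> v" using f by auto
    thus "\<exists>x\<in>Nb F v a. f = {v,a,x}" using f by (auto simp: Nb_def)
  qed
  hence "card (Nb F v a) = card {f\<in>F. {a,v} \<subseteq> f}" by (rule bij_betw_same_card)
  thus ?thesis using tri_facts(3)[OF T] e by auto
qed


lemma card_filter_sum: "finite A \<Longrightarrow> int (card {a\<in>A. P a}) = (\<Sum>a\<in>A. if P a then 1 else 0)"
  by (simp add: sum.inter_filter[symmetric])

theorem lemma1: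
  fixes F :: "'a set set" and T :: "(int \<Rightarrow> 'a set) set" and v :: 'a
  assumes "triangulation F"
    and "z_orientation F T"
    and "typeII_vertex F T v"
  shows "card {u. typeII_dir F T u v} = card {w. typeII_dir F T v w}"
proof -
  note Tr = assms(1) and O = assms(2)
  define L where "L = {u. {u,v} \<in> tri_edges F}"
  define inn where "inn a = card {b\<in>Nb F v a. Pz T v a b}" for a
  define out where "out a = card {b\<in>Nb F v a. Pz T v b a}" for a
  have finN: "finite (Nb F v a)" for a
    using finU[OF Tr] by (rule finite_subset[rotated]) (auto simp: Nb_def)
  have io: "inn a + out a = 2" if "a \<in> L" for a
  proof -
    have e: "{a,v} \<in> tri_edges F" using that by (simp add: L_def)
    hence av: "a \<noteq> v" by (auto simp: tri_edges_def)
    have x: "Pz T v a b \<longleftrightarrow> \<not> Pz T v b a" if "b \<in> Nb F v a" for b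
      using xor[OF Tr O] that av by (auto simp: Nb_def)
    have "{b\<in>Nb F v a. Pz T v a b} \<union> {b\<in>Nb F v a. Pz T v b a} = Nb F v a" using x by auto
    moreover have "{b\<in>Nb F v a. Pz T v a b} \<inter> {b\<in>Nb F v a. Pz T v b a} = {}" using x by auto
    ultimately have "inn a + out a = card (Nb F v a)"
      unfolding inn_def out_def using finN card_Un_disjoint
      by (metis (no_types, lifting) finite_Un)
    thus ?thesis using card_Nb[OF Tr e] by simp
  qed
  have pin: "passes T u v \<longleftrightarrow> inn u \<noteq> 0" for u
  proof -
    have "passes T u v \<longleftrightarrow> {b\<in>Nb F v u. Pz T v u b} \<noteq> {}"
      unfolding passes_in[OF Tr O] Nb_def by auto
    thus ?thesis unfolding inn_def using finN by simp
  qed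
  have pout: "passes T v u \<longleftrightarrow> out u \<noteq> 0" for u
  proof -
    have "passes T v u \<longleftrightarrow> {b\<in>Nb F v u. Pz T v b u} \<noteq> {}"
      unfolding passes_out[OF Tr O] Nb_def by auto
    thus ?thesis unfolding out_def using finN by simp
  qed
  have A: "{u. typeII_dir F T u v} = {a\<in>L. inn a = 2}"
  proof -
    have "typeII_dir F T u v \<longleftrightarrow> u \<in> L \<and> inn u = 2" for u
    proof (cases "u \<in> L")
      case True
      thus ?thesis using io[OF True] pin pout unfolding typeII_dir_def L_def by auto
    qed (simp add: typeII_dir_def L_def)
    thus ?thesis by auto
  qed
  have B: "{w. typeII_dir F T v w} = {a\<in>L. out a = 2}"
  proof -
    have "typeII_dir F T v u \<longleftrightarrow> u \<in> L \<and> out u = 2" for u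
    proof (cases "u \<in> L")
      case True
      thus ?thesis using io[OF True] pin pout unfolding typeII_dir_def L_def by (auto simp: insert_commute)
    qed (simp add: typeII_dir_def L_def insert_commute)
    thus ?thesis by auto
  qed
  have finL: "finite L" using finU[OF Tr] by (rule finite_subset[rotated]) (auto simp: L_def tri_edges_def)
  define Q where "Q = {(a,b). {v,a,b} \<in> F \<and> a \<noteq> b \<and> a \<noteq> v \<and> b \<noteq> v \<and> Pz T v a b}"
  have edge3: "{a,v} \<in> tri_edges F" if "{v,a,b} \<in> F" "a \<noteq> v" for a b
    using that unfolding tri_edges_def by auto
  have nv: "{v} \<notin> tri_edges F" by (simp add: tri_edges_def)
  have S1: "Sigma L (\<lambda>a. {b\<in>Nb F v a. Pz T v a b}) = Q"
    unfolding Q_def L_def Nb_def using edge3 nv by auto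
  have S2: "Sigma L (\<lambda>b. {a\<in>Nb F v b. Pz T v a b}) = prod.swap ` Q"
  proof -
    have "Sigma L (\<lambda>b. {a\<in>Nb F v b. Pz T v a b}) = {(b,a). (a,b) \<in> Q}"
      unfolding Q_def L_def Nb_def using edge3 nv by (auto simp: insert_commute)
    also have "\<dots> = prod.swap ` Q" by force
    finally show ?thesis .
  qed
  have "(\<Sum>a\<in>L. inn a) = card Q" unfolding S1[symmetric] inn_def
    by (rule card_SigmaI[symmetric]) (use finL finN in auto)
  moreover have "(\<Sum>a\<in>L. out a) = card (prod.swap ` Q)" unfolding S2[symmetric] out_def
    by (rule card_SigmaI[symmetric]) (use finL finN in auto)
  moreover have "card (prod.swap ` Q) = card Q" by (simp add: card_image)
  ultimately have sums: "(\<Sum>a\<in>L. int (inn a)) = (\<Sum>a\<in>L. int (out a))" by (metis of_nat_sum)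
  have pt: "int (inn a) - int (out a) = 2 * (if inn a = 2 then 1 else 0) - 2 * (if out a = 2 then 1 else 0)"
    if "a \<in> L" for a using io[OF that] by auto
  have "0 = (\<Sum>a\<in>L. int (inn a) - int (out a))" using sums by (simp add: sum_subtractf)
  also have "\<dots> = (\<Sum>a\<in>L. 2 * (if inn a = 2 then 1 else 0) - 2 * (if out a = 2 then 1 else 0))"
    using pt by (rule sum.cong[OF refl])
  also have "\<dots> = 2 * int (card {a\<in>L. inn a = 2}) - 2 * int (card {a\<in>L. out a = 2})"
    using finL by (simp add: card_filter_sum sum_subtractf sum_distrib_left)
  finally show ?thesis unfolding A B by simp
qed
end
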